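(* Let $m,k\in\mathbb{N}$ with $m\leq 2^k$. Then the matrix ring $\mathbb{M}_m(\mathbb{F}_2)$ is $n$-torsion clean for some natural number $n\leq 2^k$.
   Context: $\mathbb{F}_2$ is the field with two elements and $\mathbb{M}_m(\mathbb{F}_2)$ the ring of $m\times m$ matrices over it. A ring $R$ is $n$-torsion clean if every $r\in R$ can be written $r=e+u$ with $e^2=e$, $u$ a unit, $u^n=1$, and $n$ is the smallest natural number with this property. *)

theory Defs
  imports "Jordan_Normal_Form.Matrix" "HOL-Library.Z2"
begin

text \<open>The field with two elements is the type bit from HOL-Library.Z2.
  The ring of m x m matrices over it is the HOL-Algebra ring ring_mat TYPE(bit) m ().\<close>

definition clean_with_torsion :: "('a, 'b) ring_scheme \<Rightarrow> nat \<Rightarrow> bool" where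
  "clean_with_torsion R n \<longleftrightarrow>
     (\<forall>r \<in> carrier R. \<exists>e \<in> carrier R. \<exists>u \<in> Units R.
        e \<otimes>\<^bsub>R\<^esub> e = e \<and> u [^]\<^bsub>R\<^esub> n = \<one>\<^bsub>R\<^esub> \<and> r = e \<oplus>\<^bsub>R\<^esub> u)"

definition n_torsion_clean :: "('a, 'b) ring_scheme \<Rightarrow> nat \<Rightarrow> bool" where
  "n_torsion_clean R n \<longleftrightarrow>
     n \<ge> 1 \<and> clean_with_torsion R n \<and> (\<forall>n'. 1 \<le> n' \<and> n' < n \<longrightarrow> \<not> clean_with_torsion R n')"

end

theory Submission
  imports Defs
begin


definition nc :: "nat \<Rightarrow> bit mat \<Rightarrow> bool" where
  "nc n A \<longleftrightarrow> (\<exists>E N. E \<in> carrier_mat n n \<and> N \<in> carrier_mat n n \<and> E * E = E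
     \<and> N ^\<^sub>m n = 0\<^sub>m n n \<and> A = E + N)"

lemma mult_carrier_sq[simp]: "A \<in> carrier_mat n n \<Longrightarrow> B \<in> carrier_mat n n \<Longrightarrow> A * B \<in> carrier_mat n n"
  by (rule mult_carrier_mat)

lemma bit_add_self[simp]: "(x::bit) + x = 0" by (cases x) auto

lemma vec_add_self: "(v :: bit vec) \<in> carrier_vec n \<Longrightarrow> v + v = 0\<^sub>v n"
  by (intro eq_vecI) auto

lemma mat_add_self: "(A :: bit mat) \<in> carrier_mat n m \<Longrightarrow> A + A = 0\<^sub>m n m"
  by (intro eq_matI) auto

lemma pow_mat_add: assumes A: "(A :: 'a :: semiring_1 mat) \<in> carrier_mat n n"
  shows "A ^\<^sub>m (a + b) = A ^\<^sub>m a * A ^\<^sub>m b"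
proof (induct b)
  case 0 then show ?case using A by simp
next
  case (Suc b)
  have "A ^\<^sub>m (a + Suc b) = A ^\<^sub>m (a + b) * A" by simp
  also have "\<dots> = (A ^\<^sub>m a * A ^\<^sub>m b) * A" using Suc by simp
  also have "\<dots> = A ^\<^sub>m a * (A ^\<^sub>m b * A)" using A by (simp add: assoc_mult_mat[of _ n n _ n _ n])
  finally show ?case by simp
qed

lemma nc_sim: assumes B: "nc n B" and P: "P \<in> carrier_mat n n" and Q: "Q \<in> carrier_mat n n"
  and PQ: "P * Q = 1\<^sub>m n" and QP: "Q * P = 1\<^sub>m n"
  shows "nc n (P * B * Q)"
proof -
  from B obtain E N where E: "E \<in> carrier_mat n n" and N: "N \<in> carrier_mat n n"
    and EE: "E * E = E" and Nn: "N ^\<^sub>m n = 0\<^sub>m n n" and BEN: "B = E + N"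
    unfolding nc_def by blast
  have pw: "(P * N * Q) ^\<^sub>m k = P * N ^\<^sub>m k * Q" for k
  proof (induct k)
    case 0 then show ?case using P Q PQ N by simp
  next
    case (Suc k)
    have "(P * N * Q) ^\<^sub>m Suc k = (P * N ^\<^sub>m k * Q) * (P * N * Q)" using Suc by simp
    also have "\<dots> = P * (N ^\<^sub>m k * ((Q * P) * (N * Q)))"
    proof -
      have c: "N ^\<^sub>m k \<in> carrier_mat n n" "N * Q \<in> carrier_mat n n" "N ^\<^sub>m k * Q \<in> carrier_mat n n"
        "P * (N * Q) \<in> carrier_mat n n" "P * N ^\<^sub>m k \<in> carrier_mat n n" "P * N \<in> carrier_mat n n"
        using P Q N by auto
      show ?thesis using P Q N c by (simp add: assoc_mult_mat[of _ n n _ n _ n])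
    qed
    also have "\<dots> = P * (N ^\<^sub>m k * (N * Q))" using QP N Q by simp
    also have "\<dots> = P * N ^\<^sub>m Suc k * Q" using P Q N 
      by (simp add: assoc_mult_mat[of _ n n _ n _ n])
    finally show ?case .
  qed
  have "(P * E * Q) * (P * E * Q) = P * (E * ((Q * P) * (E * Q)))"
    using P Q E by (simp add: assoc_mult_mat[of _ n n _ n _ n])
  also have "\<dots> = P * ((E * E) * Q)" using P Q E QP by (simp add: assoc_mult_mat[of _ n n _ n _ n])
  also have "\<dots> = P * E * Q" using P Q E EE by (simp add: assoc_mult_mat[of _ n n _ n _ n])
  finally have idem: "(P * E * Q) * (P * E * Q) = P * E * Q" .
  have "P * B * Q = P * E * Q + P * N * Q"
    unfolding BEN using P Q E N
    by (simp add: mult_add_distrib_mat[of _ n n] add_mult_distrib_mat[of _ n n])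
  moreover have "(P * N * Q) ^\<^sub>m n = 0\<^sub>m n n" unfolding pw Nn using P Q by simp
  ultimately show ?thesis unfolding nc_def using idem P Q E N
    by (intro exI[of _ "P * E * Q"] exI[of _ "P * N * Q"]) auto
qed


lemma pow_block_upper:
  assumes N1: "N1 \<in> carrier_mat a a" and N2: "N2 \<in> carrier_mat b b" and X: "X \<in> carrier_mat a b"
  shows "\<exists>Y \<in> carrier_mat a b. (four_block_mat N1 X (0\<^sub>m b a) N2) ^\<^sub>m k
     = four_block_mat (N1 ^\<^sub>m k) Y (0\<^sub>m b a) (N2 ^\<^sub>m k)"
proof (induct k)
  case 0
  show ?case using N1 N2 by (intro bexI[of _ "0\<^sub>m a b"]) auto
next
  case (Suc k)
  then obtain Y where Y: "Y \<in> carrier_mat a b" and eq: "(four_block_mat N1 X (0\<^sub>m b a) N2) ^\<^sub>m k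
     = four_block_mat (N1 ^\<^sub>m k) Y (0\<^sub>m b a) (N2 ^\<^sub>m k)" by blast
  have "(four_block_mat N1 X (0\<^sub>m b a) N2) ^\<^sub>m Suc k
     = four_block_mat (N1 ^\<^sub>m k) Y (0\<^sub>m b a) (N2 ^\<^sub>m k) * four_block_mat N1 X (0\<^sub>m b a) N2"
    using eq by simp
  also have "\<dots> = four_block_mat (N1 ^\<^sub>m k * N1 + Y * 0\<^sub>m b a) (N1 ^\<^sub>m k * X + Y * N2)
      (0\<^sub>m b a * N1 + N2 ^\<^sub>m k * 0\<^sub>m b a) (0\<^sub>m b a * X + N2 ^\<^sub>m k * N2)"
    by (rule mult_four_block_mat, insert N1 N2 X Y, auto)
  also have "\<dots> = four_block_mat (N1 ^\<^sub>m Suc k) (N1 ^\<^sub>m k * X + Y * N2) (0\<^sub>m b a) (N2 ^\<^sub>m Suc k)"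
    using N1 N2 X Y by (simp add: right_add_zero_mat[of "N1 ^\<^sub>m k * N1" a a] left_add_zero_mat[of "N2 ^\<^sub>m k * N2" b b])
  finally show ?case using N1 N2 X Y by (intro bexI[of _ "N1 ^\<^sub>m k * X + Y * N2"]) auto
qed

lemma pow_block_lower:
  assumes N1: "N1 \<in> carrier_mat a a" and N2: "N2 \<in> carrier_mat b b" and X: "X \<in> carrier_mat b a"
  shows "\<exists>Y \<in> carrier_mat b a. (four_block_mat N1 (0\<^sub>m a b) X N2) ^\<^sub>m k
     = four_block_mat (N1 ^\<^sub>m k) (0\<^sub>m a b) Y (N2 ^\<^sub>m k)"
proof (induct k)
  case 0
  show ?case using N1 N2 by (intro bexI[of _ "0\<^sub>m b a"]) auto
next
  case (Suc k)
  then obtain Y where Y: "Y \<in> carrier_mat b a" and eq: "(four_block_mat N1 (0\<^sub>m a b) X N2) ^\<^sub>m k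
     = four_block_mat (N1 ^\<^sub>m k) (0\<^sub>m a b) Y (N2 ^\<^sub>m k)" by blast
  have "(four_block_mat N1 (0\<^sub>m a b) X N2) ^\<^sub>m Suc k
     = four_block_mat (N1 ^\<^sub>m k) (0\<^sub>m a b) Y (N2 ^\<^sub>m k) * four_block_mat N1 (0\<^sub>m a b) X N2"
    using eq by simp
  also have "\<dots> = four_block_mat (N1 ^\<^sub>m k * N1 + 0\<^sub>m a b * X) (N1 ^\<^sub>m k * 0\<^sub>m a b + 0\<^sub>m a b * N2)
      (Y * N1 + N2 ^\<^sub>m k * X) (Y * 0\<^sub>m a b + N2 ^\<^sub>m k * N2)"
    by (rule mult_four_block_mat, insert N1 N2 X Y, auto)
  also have "\<dots> = four_block_mat (N1 ^\<^sub>m Suc k) (0\<^sub>m a b) (Y * N1 + N2 ^\<^sub>m k * X) (N2 ^\<^sub>m Suc k)"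
    using N1 N2 X Y by (simp add: right_add_zero_mat[of "N1 ^\<^sub>m k * N1" a a] left_add_zero_mat[of "N2 ^\<^sub>m k * N2" b b])
  finally show ?case using N1 N2 X Y by (intro bexI[of _ "Y * N1 + N2 ^\<^sub>m k * X"]) auto
qed

lemma nc_block_upper:
  assumes A1: "nc a A1" and A2: "nc b A2" and X: "X \<in> carrier_mat a b"
  shows "nc (a + b) (four_block_mat A1 X (0\<^sub>m b a) A2)"
proof -
  from A1 obtain E1 N1 where E1: "E1 \<in> carrier_mat a a" and N1: "N1 \<in> carrier_mat a a"
    and EE1: "E1 * E1 = E1" and Nn1: "N1 ^\<^sub>m a = 0\<^sub>m a a" and A1EN: "A1 = E1 + N1"
    unfolding nc_def by blast
  from A2 obtain E2 N2 where E2: "E2 \<in> carrier_mat b b" and N2: "N2 \<in> carrier_mat b b"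
    and EE2: "E2 * E2 = E2" and Nn2: "N2 ^\<^sub>m b = 0\<^sub>m b b" and A2EN: "A2 = E2 + N2"
    unfolding nc_def by blast
  let ?E = "four_block_mat E1 (0\<^sub>m a b) (0\<^sub>m b a) E2"
  let ?N = "four_block_mat N1 X (0\<^sub>m b a) N2"
  have "?E * ?E = four_block_mat (E1 * E1 + 0\<^sub>m a b * 0\<^sub>m b a) (E1 * 0\<^sub>m a b + 0\<^sub>m a b * E2)
      (0\<^sub>m b a * E1 + E2 * 0\<^sub>m b a) (0\<^sub>m b a * 0\<^sub>m a b + E2 * E2)"
    by (rule mult_four_block_mat, insert E1 E2, auto)
  also have "\<dots> = ?E" using E1 E2 EE1 EE2 by simp
  finally have EE: "?E * ?E = ?E" .
  obtain Y1 where Y1: "Y1 \<in> carrier_mat a b" and p1: "?N ^\<^sub>m a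
     = four_block_mat (N1 ^\<^sub>m a) Y1 (0\<^sub>m b a) (N2 ^\<^sub>m a)"
    using pow_block_upper[OF N1 N2 X] by blast
  obtain Y2 where Y2: "Y2 \<in> carrier_mat a b" and p2: "?N ^\<^sub>m b
     = four_block_mat (N1 ^\<^sub>m b) Y2 (0\<^sub>m b a) (N2 ^\<^sub>m b)"
    using pow_block_upper[OF N1 N2 X] by blast
  have Ncar: "?N \<in> carrier_mat (a+b) (a+b)" using N1 N2 by auto
  have "?N ^\<^sub>m (a + b) = ?N ^\<^sub>m a * ?N ^\<^sub>m b" by (rule pow_mat_add[OF Ncar])
  also have "\<dots> = four_block_mat (0\<^sub>m a a) Y1 (0\<^sub>m b a) (N2 ^\<^sub>m a)
      * four_block_mat (N1 ^\<^sub>m b) Y2 (0\<^sub>m b a) (0\<^sub>m b b)" unfolding p1 p2 Nn1 Nn2 ..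
  also have "\<dots> = four_block_mat (0\<^sub>m a a * N1 ^\<^sub>m b + Y1 * 0\<^sub>m b a) (0\<^sub>m a a * Y2 + Y1 * 0\<^sub>m b b)
      (0\<^sub>m b a * N1 ^\<^sub>m b + N2 ^\<^sub>m a * 0\<^sub>m b a) (0\<^sub>m b a * Y2 + N2 ^\<^sub>m a * 0\<^sub>m b b)"
    by (rule mult_four_block_mat, insert N1 N2 Y1 Y2, auto)
  also have "\<dots> = 0\<^sub>m (a+b) (a+b)" using N1 N2 Y1 Y2 by simp
  finally have Nn: "?N ^\<^sub>m (a + b) = 0\<^sub>m (a+b) (a+b)" .
  have "four_block_mat A1 X (0\<^sub>m b a) A2 = ?E + ?N"
    unfolding A1EN A2EN
    by (subst add_four_block_mat[of _ a a _ b _ b], insert E1 E2 N1 N2 X, auto)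
  then show ?thesis unfolding nc_def using EE Nn E1 E2 Ncar
    by (intro exI[of _ ?E] exI[of _ ?N]) auto
qed

lemma nc_block_lower:
  assumes A1: "nc a A1" and A2: "nc b A2" and X: "X \<in> carrier_mat b a"
  shows "nc (a + b) (four_block_mat A1 (0\<^sub>m a b) X A2)"
proof -
  from A1 obtain E1 N1 where E1: "E1 \<in> carrier_mat a a" and N1: "N1 \<in> carrier_mat a a"
    and EE1: "E1 * E1 = E1" and Nn1: "N1 ^\<^sub>m a = 0\<^sub>m a a" and A1EN: "A1 = E1 + N1"
    unfolding nc_def by blast
  from A2 obtain E2 N2 where E2: "E2 \<in> carrier_mat b b" and N2: "N2 \<in> carrier_mat b b"
    and EE2: "E2 * E2 = E2" and Nn2: "N2 ^\<^sub>m b = 0\<^sub>m b b" and A2EN: "A2 = E2 + N2"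
    unfolding nc_def by blast
  let ?E = "four_block_mat E1 (0\<^sub>m a b) (0\<^sub>m b a) E2"
  let ?N = "four_block_mat N1 (0\<^sub>m a b) X N2"
  have "?E * ?E = four_block_mat (E1 * E1 + 0\<^sub>m a b * 0\<^sub>m b a) (E1 * 0\<^sub>m a b + 0\<^sub>m a b * E2)
      (0\<^sub>m b a * E1 + E2 * 0\<^sub>m b a) (0\<^sub>m b a * 0\<^sub>m a b + E2 * E2)"
    by (rule mult_four_block_mat, insert E1 E2, auto)
  also have "\<dots> = ?E" using E1 E2 EE1 EE2 by simp
  finally have EE: "?E * ?E = ?E" .
  obtain Y1 where Y1: "Y1 \<in> carrier_mat b a" and p1: "?N ^\<^sub>m a
     = four_block_mat (N1 ^\<^sub>m a) (0\<^sub>m a b) Y1 (N2 ^\<^sub>m a)"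
    using pow_block_lower[OF N1 N2 X] by blast
  obtain Y2 where Y2: "Y2 \<in> carrier_mat b a" and p2: "?N ^\<^sub>m b
     = four_block_mat (N1 ^\<^sub>m b) (0\<^sub>m a b) Y2 (N2 ^\<^sub>m b)"
    using pow_block_lower[OF N1 N2 X] by blast
  have Ncar: "?N \<in> carrier_mat (a+b) (a+b)" using N1 N2 by auto
  have "?N ^\<^sub>m (a + b) = ?N ^\<^sub>m b * ?N ^\<^sub>m a" using pow_mat_add[OF Ncar, of b a] by (simp add: add.commute)
  also have "\<dots> = four_block_mat (N1 ^\<^sub>m b) (0\<^sub>m a b) Y2 (0\<^sub>m b b)
      * four_block_mat (0\<^sub>m a a) (0\<^sub>m a b) Y1 (N2 ^\<^sub>m a)" unfolding p1 p2 Nn1 Nn2 ..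
  also have "\<dots> = four_block_mat (N1 ^\<^sub>m b * 0\<^sub>m a a + 0\<^sub>m a b * Y1) (N1 ^\<^sub>m b * 0\<^sub>m a b + 0\<^sub>m a b * N2 ^\<^sub>m a)
      (Y2 * 0\<^sub>m a a + 0\<^sub>m b b * Y1) (Y2 * 0\<^sub>m a b + 0\<^sub>m b b * N2 ^\<^sub>m a)"
    by (rule mult_four_block_mat, insert N1 N2 Y1 Y2, auto)
  also have "\<dots> = 0\<^sub>m (a+b) (a+b)" using N1 N2 Y1 Y2 by simp
  finally have Nn: "?N ^\<^sub>m (a + b) = 0\<^sub>m (a+b) (a+b)" .
  have "four_block_mat A1 (0\<^sub>m a b) X A2 = ?E + ?N"
    unfolding A1EN A2EN
    by (subst add_four_block_mat[of _ a a _ b _ b], insert E1 E2 N1 N2 X, auto)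
  then show ?thesis unfolding nc_def using EE Nn E1 E2 Ncar
    by (intro exI[of _ ?E] exI[of _ ?N]) auto
qed


declare add_bit_eq_xor[simp del] mult_bit_eq_and[simp del]

lemma sum_one_nz:
  assumes z: "\<And>c. c < d \<Longrightarrow> c \<noteq> p \<Longrightarrow> f c = (0::'a::comm_monoid_add)"
  shows "(\<Sum>c \<in> {0..<(d::nat)}. f c) = (if p < d then f p else 0)"
proof (cases "p < d")
  case True
  have sub: "{p} \<subseteq> {0..<d}" using True by auto
  have "(\<Sum>c \<in> {0..<d}. f c) = (\<Sum>c \<in> {p}. f c)"
    by (rule sum.mono_neutral_right[OF finite_atLeastLessThan sub], use z in auto)
  then show ?thesis using True by simp
next
  case False
  have "(\<Sum>c \<in> {0..<d}. f c) = 0" by (rule sum.neutral, use False z in auto)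
  then show ?thesis using False by simp
qed

lemma sum_two_nz:
  assumes pq: "p < d" "q < d" "p \<noteq> q" and z: "\<And>c. c < d \<Longrightarrow> c \<noteq> p \<Longrightarrow> c \<noteq> q \<Longrightarrow> f c = (0::'a::comm_monoid_add)"
  shows "(\<Sum>c \<in> {0..<(d::nat)}. f c) = f p + f q"
proof -
  have sub: "{p,q} \<subseteq> {0..<d}" using pq by auto
  have "(\<Sum>c \<in> {0..<d}. f c) = (\<Sum>c \<in> {p,q}. f c)"
    by (rule sum.mono_neutral_right[OF finite_atLeastLessThan sub], use z in auto)
  then show ?thesis using pq by simp
qed

lemma mult_unit_vec_col: assumes A: "(A :: bit mat) \<in> carrier_mat n m" and j: "j < m"
  shows "A *\<^sub>v unit_vec m j = col A j"
proof (rule eq_vecI)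
  fix i assume "i < dim_vec (col A j)"
  then have i: "i < n" using A by auto
  have "(A *\<^sub>v unit_vec m j) $ i = row A i \<bullet> unit_vec m j" using A i by auto
  also have "\<dots> = row A i $ j" using j by simp
  also have "\<dots> = A $$ (i,j)" using A i j by auto
  also have "\<dots> = col A j $ i" using A i j by auto
  finally show "(A *\<^sub>v unit_vec m j) $ i = col A j $ i" .
qed (use A in auto)

lemma mat_zero_by_cols: assumes M: "(M :: bit mat) \<in> carrier_mat n m"
  and z: "\<And>j. j < m \<Longrightarrow> M *\<^sub>v unit_vec m j = 0\<^sub>v n"
shows "M = 0\<^sub>m n m"
proof (rule eq_matI)
  fix i j assume i: "i < dim_row (0\<^sub>m n m)" and j: "j < dim_col (0\<^sub>m n m)"
  have "M $$ (i,j) = (M *\<^sub>v unit_vec m j) $ i" using M i j by (simp add: mult_unit_vec_col)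
  also have "\<dots> = 0" using z[of j] i j by simp
  finally show "M $$ (i,j) = 0\<^sub>m n m $$ (i,j)" using i j by simp
qed (insert M, auto)




definition comp :: "nat \<Rightarrow> bit vec \<Rightarrow> bit mat" where
  "comp d x = mat d d (\<lambda>(a,b). if Suc b < d then (if a = Suc b then 1 else 0) else x $ a)"

definition sh :: "nat \<Rightarrow> bit mat" where
  "sh d = mat d d (\<lambda>(a,b). if a = Suc b then 1 else 0)"

lemma sh_pow: "sh d ^\<^sub>m k = mat d d (\<lambda>(a,b). if a = b + k then 1 else 0)"
proof (induct k)
  case 0 then show ?case by (intro eq_matI, auto simp: sh_def)
next
  case (Suc k)
  have "sh d ^\<^sub>m Suc k = sh d ^\<^sub>m k * sh d" by simp
  also have "\<dots> = mat d d (\<lambda>(a,b). if a = b + Suc k then 1 else 0)"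
  proof (rule eq_matI)
    fix a b assume a: "a < dim_row (mat d d (\<lambda>(a,b). if a = b + Suc k then 1 else (0::bit)))"
      and b: "b < dim_col (mat d d (\<lambda>(a,b). if a = b + Suc k then 1 else (0::bit)))"
    then have a: "a < d" and b: "b < d" by auto
    have "(sh d ^\<^sub>m k * sh d) $$ (a,b) = (\<Sum>c \<in> {0..<d}. (if a = c + k then 1 else 0) * (if c = Suc b then 1 else (0::bit)))"
      unfolding Suc using a b by (simp add: sh_def scalar_prod_def)
    also have "\<dots> = (if Suc b < d then (if a = Suc b + k then 1 else 0) * 1 else 0)"
      by (subst sum_one_nz[of _ "Suc b"], auto)
    also have "\<dots> = (if a = b + Suc k then 1 else 0)" using a by auto
    finally show "(sh d ^\<^sub>m k * sh d) $$ (a,b) = mat d d (\<lambda>(a,b). if a = b + Suc k then 1 else (0::bit)) $$ (a,b)"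
      using a b by simp
  qed (auto simp: sh_def)
  finally show ?case .
qed

lemma sh_nil: "sh d ^\<^sub>m d = 0\<^sub>m d d"
  unfolding sh_pow by (intro eq_matI, auto)

lemma sh_carrier[simp]: "sh d \<in> carrier_mat d d" by (simp add: sh_def)
lemma comp_carrier[simp]: "comp d x \<in> carrier_mat d d" by (simp add: comp_def)

lemma nc_comp_a: assumes x: "x \<in> carrier_vec d" and d: "0 < d" and xl: "x $ (d - 1) = 1"
  shows "nc d (comp d x)"
proof -
  define E where "E = mat d d (\<lambda>(a,b). if Suc b = d then x $ a else 0)"
  have E: "E \<in> carrier_mat d d" by (simp add: E_def)
  have EE: "E * E = E"
  proof (rule eq_matI)
    fix a b assume "a < dim_row E" "b < dim_col E"
    then have a: "a < d" and b: "b < d" by (auto simp: E_def)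
    have "(E * E) $$ (a,b) = (\<Sum>c \<in> {0..<d}. (if Suc c = d then x $ a else 0) * (if Suc b = d then x $ c else 0))"
      using a b by (simp add: E_def scalar_prod_def)
    also have "\<dots> = (if d - 1 < d then (if Suc (d - 1) = d then x $ a else 0) * (if Suc b = d then x $ (d - 1) else 0) else 0)"
      by (subst sum_one_nz[of _ "d - 1"], auto)
    also have "\<dots> = E $$ (a,b)" using a b d xl by (simp add: E_def)
    finally show "(E * E) $$ (a,b) = E $$ (a,b)" .
  qed (auto simp: E_def)
  have sum: "comp d x = E + sh d"
    by (intro eq_matI, auto simp: E_def comp_def sh_def)
  show ?thesis unfolding nc_def
    by (intro exI[of _ E] exI[of _ "sh d"], insert E EE sum sh_nil, auto)
qed


lemma mult_zero_vec_bit: "(M::bit mat) \<in> carrier_mat n m \<Longrightarrow> M *\<^sub>v 0\<^sub>v m = 0\<^sub>v n"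
  by (intro eq_vecI, auto)

definition uv :: "nat \<Rightarrow> nat \<Rightarrow> bit vec" where
  "uv d j = vec d (\<lambda>i. if i \<le> j then 1 else 0)"

lemma uv_carrier[simp]: "uv d j \<in> carrier_vec d" by (simp add: uv_def)

lemma nc_comp_b: assumes x: "x \<in> carrier_vec d" and d: "0 < d" and xl: "x $ (d - 1) = 0"
  and x0: "x $ 0 = 1"
  shows "nc d (comp d x)"
proof -
  have d2: "2 \<le> d" using d xl x0 by (cases "d = 1", auto)
  define y where "y a = (if a = 0 then 0 else if Suc a = d then 1 else x $ a + 1)" for a
  define E where "E = mat d d (\<lambda>(a,b). if b = 0 then (if a = 0 then 1 else 0) else if Suc b = d then y a else 0)"
  define N where "N = mat d d (\<lambda>(a,b). if Suc b = d then 1 else if b = 0 then (if a \<le> 1 then 1 else 0)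
     else if a = Suc b then 1 else (0::bit))"
  have E: "E \<in> carrier_mat d d" by (simp add: E_def)
  have N: "N \<in> carrier_mat d d" by (simp add: N_def)
  have EE: "E * E = E"
  proof (rule eq_matI)
    fix a b assume "a < dim_row E" "b < dim_col E"
    then have a: "a < d" and b: "b < d" by (auto simp: E_def)
    have "(E * E) $$ (a,b) = (\<Sum>c \<in> {0..<d}. E $$ (a,c) * E $$ (c,b))"
      using a b E by (simp add: scalar_prod_def)
    also have "\<dots> = E $$ (a,0) * E $$ (0,b) + E $$ (a,d-1) * E $$ (d-1,b)"
      by (rule sum_two_nz, insert d2 a b, auto simp: E_def)
    also have "\<dots> = E $$ (a,b)" using a b d2 by (auto simp: E_def y_def)
    finally show "(E * E) $$ (a,b) = E $$ (a,b)" .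
  qed (auto simp: E_def)
  have sum: "comp d x = E + N"
  proof (rule eq_matI)
    fix a b assume "a < dim_row (E + N)" "b < dim_col (E + N)"
    then have a: "a < d" and b: "b < d" by (auto simp: E_def N_def)
    have "Suc a = d \<Longrightarrow> x $ a = 0" using xl by (metis diff_Suc_1)
    then show "comp d x $$ (a,b) = (E + N) $$ (a,b)" using a b d2 x0
      by (auto simp: E_def N_def comp_def y_def)
  qed (auto simp: E_def N_def comp_def)
  have Nw: "(N *\<^sub>v w) $ a = w $ (if a \<le> 1 then 0 else a - 1) + w $ (d - 1)"
    if w: "w \<in> carrier_vec d" and a: "a < d" for w a
  proof -
    have "(N *\<^sub>v w) $ a = (\<Sum>c \<in> {0..<d}. N $$ (a,c) * w $ c)"
      using a N w by (simp add: scalar_prod_def)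
    also have "\<dots> = N $$ (a, if a \<le> 1 then 0 else a - 1) * w $ (if a \<le> 1 then 0 else a - 1)
       + N $$ (a,d-1) * w $ (d - 1)"
      by (rule sum_two_nz, insert d2 a, auto simp: N_def)
    also have "\<dots> = w $ (if a \<le> 1 then 0 else a - 1) + w $ (d - 1)"
      using a d2 by (auto simp: N_def)
    finally show ?thesis .
  qed
  have Nu: "N *\<^sub>v uv d j = (if Suc j < d then uv d (Suc j) else 0\<^sub>v d)" if j: "j < d" for j
  proof (rule eq_vecI)
    fix a assume "a < dim_vec (if Suc j < d then uv d (Suc j) else 0\<^sub>v d)"
    then have a: "a < d" by (auto simp: uv_def split: if_splits)
    show "(N *\<^sub>v uv d j) $ a = (if Suc j < d then uv d (Suc j) else 0\<^sub>v d) $ a"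
      unfolding Nw[OF uv_carrier a] using a j d2 by (auto simp: uv_def)
  qed (use N in \<open>auto simp: uv_def\<close>)
  have Nku: "N ^\<^sub>m k *\<^sub>v uv d j = (if j + k < d then uv d (j + k) else 0\<^sub>v d)" if j: "j < d" for j k
    using j
  proof (induct k arbitrary: j)
    case 0 then show ?case using N by simp
  next
    case (Suc k)
    have "N ^\<^sub>m Suc k *\<^sub>v uv d j = N ^\<^sub>m k *\<^sub>v (N *\<^sub>v uv d j)"
      using N by (simp add: assoc_mult_mat_vec[of _ d d _ d])
    also have "\<dots> = (if j + Suc k < d then uv d (j + Suc k) else 0\<^sub>v d)"
    proof (cases "Suc j < d")
      case True
      then show ?thesis unfolding Nu[OF Suc(2)] using Suc(1)[OF True] by simp
    next
      case False
      then show ?thesis unfolding Nu[OF Suc(2)] using N by (simp add: mult_zero_vec_bit[of _ d d])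
    qed
    finally show ?case .
  qed
  have Nn: "N ^\<^sub>m d = 0\<^sub>m d d"
  proof (rule mat_zero_by_cols)
    show "N ^\<^sub>m d \<in> carrier_mat d d" using N by simp
    fix j assume j: "j < d"
    show "N ^\<^sub>m d *\<^sub>v unit_vec d j = 0\<^sub>v d"
    proof (cases j)
      case 0
      have "unit_vec d j = uv d 0" unfolding 0 by (intro eq_vecI, auto simp: uv_def unit_vec_def)
      then show ?thesis using Nku[of 0 d] j by simp
    next
      case (Suc i)
      have "unit_vec d j = uv d j + uv d i" using Suc by (intro eq_vecI, auto simp: uv_def unit_vec_def)
      then have "N ^\<^sub>m d *\<^sub>v unit_vec d j = N ^\<^sub>m d *\<^sub>v uv d j + N ^\<^sub>m d *\<^sub>v uv d i"
        using N by (simp add: mult_add_distrib_mat_vec[of _ d d])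
      then show ?thesis using Nku[of j d] Nku[of i d] j Suc by simp
    qed
  qed
  show ?thesis unfolding nc_def
    by (intro exI[of _ E] exI[of _ N], insert E N EE sum Nn, auto)
qed


lemma nc_zero1: "nc 1 (0\<^sub>m 1 1)"
  unfolding nc_def by (intro exI[of _ "0\<^sub>m 1 1"] exI[of _ "0\<^sub>m 1 1"], auto)

lemma comp_split: assumes x: "x \<in> carrier_vec (Suc d)" and d: "0 < d" and x0: "x $ 0 = 0"
  shows "comp (1 + d) x = four_block_mat (0\<^sub>m 1 1) (0\<^sub>m 1 d)
     (mat d 1 (\<lambda>(a,b). if a = 0 then 1 else 0)) (comp d (vec d (\<lambda>a. x $ Suc a)))"
proof (rule eq_matI)
  fix i j assume i: "i < dim_row (four_block_mat (0\<^sub>m 1 1) (0\<^sub>m 1 d)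
     (mat d 1 (\<lambda>(a,b). if a = 0 then 1 else (0::bit))) (comp d (vec d (\<lambda>a. x $ Suc a))))"
    and j: "j < dim_col (four_block_mat (0\<^sub>m 1 1) (0\<^sub>m 1 d)
     (mat d 1 (\<lambda>(a,b). if a = 0 then 1 else (0::bit))) (comp d (vec d (\<lambda>a. x $ Suc a))))"
  then have i': "i < Suc d" and j': "j < Suc d" by (auto simp: comp_def)
  show "comp (1 + d) x $$ (i,j) = four_block_mat (0\<^sub>m 1 1) (0\<^sub>m 1 d)
     (mat d 1 (\<lambda>(a,b). if a = 0 then 1 else 0)) (comp d (vec d (\<lambda>a. x $ Suc a))) $$ (i,j)"
    using i' j' d x0 by (cases i; cases j; auto simp: comp_def)
qed (auto simp: comp_def)

lemma nc_comp: "x \<in> carrier_vec d \<Longrightarrow> 0 < d \<Longrightarrow> nc d (comp d x)"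
proof (induct d arbitrary: x)
  case 0 then show ?case by simp
next
  case (Suc d)
  note x = Suc(2)
  show ?case
  proof (cases "x $ (Suc d - 1) = 1")
    case True then show ?thesis using nc_comp_a[OF x] by simp
  next
    case F1: False
    show ?thesis
    proof (cases "x $ 0 = 1")
      case True then show ?thesis using nc_comp_b[OF x] F1 by simp
    next
      case False
      then have x0: "x $ 0 = 0" by simp
      show ?thesis
      proof (cases "d = 0")
        case True
        have "comp (Suc d) x = 0\<^sub>m 1 1" using True x0 by (intro eq_matI, auto simp: comp_def)
        then show ?thesis using nc_zero1 True by simp
      next
        case False
        then have d: "0 < d" by simp
        have "nc d (comp d (vec d (\<lambda>a. x $ Suc a)))" by (rule Suc(1), auto simp: d)
        from nc_block_lower[OF nc_zero1 this, of "mat d 1 (\<lambda>(a,b). if a = 0 then 1 else 0)"]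
        have "nc (1 + d) (comp (1 + d) x)" unfolding comp_split[OF x d x0] by simp
        then show ?thesis by simp
      qed
    qed
  qed
qed


definition rk1 :: "nat \<Rightarrow> bit vec \<Rightarrow> bit vec \<Rightarrow> bit mat" where
  "rk1 n u v = mat n n (\<lambda>(a,b). u $ a * v $ b)"

lemma rk1_carrier[simp]: "rk1 n u v \<in> carrier_mat n n" by (simp add: rk1_def)

lemma bit_add_cancel[simp]: "(x::bit) + y + y = x" by (cases y, auto)

lemma rk1_mult_vec: assumes u: "u \<in> carrier_vec n" and v: "v \<in> carrier_vec n" and w: "w \<in> carrier_vec n"
  shows "(1\<^sub>m n + rk1 n u v) *\<^sub>v w = w + (v \<bullet> w) \<cdot>\<^sub>v u"
proof -
  have "(1\<^sub>m n + rk1 n u v) *\<^sub>v w = 1\<^sub>m n *\<^sub>v w + rk1 n u v *\<^sub>v w"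
    by (rule add_mult_distrib_mat_vec[OF one_carrier_mat rk1_carrier w])
  also have "rk1 n u v *\<^sub>v w = (v \<bullet> w) \<cdot>\<^sub>v u"
  proof (rule eq_vecI)
    fix a assume "a < dim_vec ((v \<bullet> w) \<cdot>\<^sub>v u)"
    then have a: "a < n" using u by simp
    have "(rk1 n u v *\<^sub>v w) $ a = (\<Sum>c \<in> {0..<n}. u $ a * v $ c * w $ c)"
      using a w by (simp add: rk1_def scalar_prod_def)
    also have "\<dots> = u $ a * (\<Sum>c \<in> {0..<n}. v $ c * w $ c)"
      by (simp add: sum_distrib_left mult.assoc)
    also have "\<dots> = ((v \<bullet> w) \<cdot>\<^sub>v u) $ a" using a u w by (simp add: scalar_prod_def mult.commute)
    finally show "(rk1 n u v *\<^sub>v w) $ a = ((v \<bullet> w) \<cdot>\<^sub>v u) $ a" .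
  qed (use u in \<open>auto simp: rk1_def\<close>)
  finally show ?thesis using w by simp
qed

lemma one_by_vec: assumes M: "(M::bit mat) \<in> carrier_mat n n" and h: "\<And>w. w \<in> carrier_vec n \<Longrightarrow> M *\<^sub>v w = w"
  shows "M = 1\<^sub>m n"
proof (rule eq_matI)
  fix a b assume a: "a < dim_row (1\<^sub>m n :: bit mat)" and b: "b < dim_col (1\<^sub>m n :: bit mat)"
  have "M $$ (a,b) = (M *\<^sub>v unit_vec n b) $ a" using M a b by (simp add: mult_unit_vec_col)
  also have "\<dots> = unit_vec n b $ a" using h[of "unit_vec n b"] by simp
  finally show "M $$ (a,b) = 1\<^sub>m n $$ (a,b)" using a b by auto
qed (use M in auto)

lemma rk1_invol: assumes u: "u \<in> carrier_vec n" and v: "v \<in> carrier_vec n" and vu: "v \<bullet> u = 0"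
  shows "(1\<^sub>m n + rk1 n u v) * (1\<^sub>m n + rk1 n u v) = 1\<^sub>m n"
proof (rule one_by_vec)
  let ?P = "1\<^sub>m n + rk1 n u v"
  have P: "?P \<in> carrier_mat n n" by simp
  show "?P * ?P \<in> carrier_mat n n" by simp
  fix w :: "bit vec" assume w: "w \<in> carrier_vec n"
  let ?s = "v \<bullet> w"
  have w': "w + ?s \<cdot>\<^sub>v u \<in> carrier_vec n" using w u by simp
  have vs: "v \<bullet> (w + ?s \<cdot>\<^sub>v u) = ?s"
    using v w u vu by (simp add: scalar_prod_add_distrib[of v n])
  have "(?P * ?P) *\<^sub>v w = ?P *\<^sub>v (?P *\<^sub>v w)" using P w by (simp add: assoc_mult_mat_vec[of _ n n _ n])
  also have "\<dots> = (w + ?s \<cdot>\<^sub>v u) + ?s \<cdot>\<^sub>v u" unfolding rk1_mult_vec[OF u v w] rk1_mult_vec[OF u v w'] vs ..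
  also have "\<dots> = w" using w u by (intro eq_vecI, auto)
  finally show "(?P * ?P) *\<^sub>v w = w" .
qed

lemma nc_invol: assumes A: "A \<in> carrier_mat n n" and P: "P \<in> carrier_mat n n" and PP: "P * P = 1\<^sub>m n"
  and nc: "nc n (P * A * P)"
shows "nc n A"
proof -
  have "nc n (P * (P * A * P) * P)" by (rule nc_sim[OF nc P P PP PP])
  also have "P * (P * A * P) * P = (P * P) * A * (P * P)"
    using A P by (simp add: assoc_mult_mat[of _ n n _ n _ n])
  also have "\<dots> = A" using A PP by simp
  finally show ?thesis .
qed




lemma col_sim: assumes P: "(P::bit mat) \<in> carrier_mat n n" and M: "M \<in> carrier_mat n n" and i: "i < n"
  shows "col (P * M * P) i = P *\<^sub>v (M *\<^sub>v (P *\<^sub>v unit_vec n i))"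
proof -
  have "col (P * M * P) i = (P * M * P) *\<^sub>v unit_vec n i"
    using P M i by (simp add: mult_unit_vec_col[of _ n n])
  also have "\<dots> = P *\<^sub>v (M *\<^sub>v (P *\<^sub>v unit_vec n i))"
    using P M by (simp add: assoc_mult_mat_vec[of _ n n _ n])
  finally show ?thesis .
qed

lemma add_zero_smult: "w \<in> carrier_vec n \<Longrightarrow> u \<in> carrier_vec n \<Longrightarrow> w + (0::bit) \<cdot>\<^sub>v u = w"
  by (intro eq_vecI, auto)

lemma step_sim:
  assumes A: "(A :: bit mat) \<in> carrier_mat n n" and jn: "Suc j < n"
    and sh: "\<forall>i<j. col A i = unit_vec n (Suc i)"
    and k: "j < k" "k < n" "A $$ (k,j) = 1"
  shows "\<exists>P1 P2. P1 \<in> carrier_mat n n \<and> P2 \<in> carrier_mat n n \<and> P1 * P1 = 1\<^sub>m n \<and> P2 * P2 = 1\<^sub>m n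
    \<and> (\<forall>i<Suc j. col (P2 * (P1 * A * P1) * P2) i = unit_vec n (Suc i))"
proof -
  define v :: "bit vec" where "v = unit_vec n (Suc j) + (if A $$ (Suc j, j) = 1 then 0\<^sub>v n else unit_vec n k)"
  define u :: "bit vec" where "u = vec n (\<lambda>a. (if j < a then A $$ (a,j) else 0) + (if a = Suc j then 1 else (0::bit)))"
  define X :: "bit vec" where "X = vec n (\<lambda>a. if a \<le> j then A $$ (a,j) else (0::bit))"
  define e :: "bit vec" where "e = unit_vec n (Suc j)"
  define P1 where "P1 = 1\<^sub>m n + rk1 n u v"
  define P2 where "P2 = 1\<^sub>m n + rk1 n X e"
  have v: "v \<in> carrier_vec n" by (simp add: v_def)
  have u: "u \<in> carrier_vec n" by (simp add: u_def)
  have X: "X \<in> carrier_vec n" by (simp add: X_def)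
  have e: "e \<in> carrier_vec n" by (simp add: e_def)
  have P1: "P1 \<in> carrier_mat n n" by (simp add: P1_def)
  have P2: "P2 \<in> carrier_mat n n" by (simp add: P2_def)
  have vdot: "v \<bullet> w = w $ Suc j + (if A $$ (Suc j, j) = 1 then 0 else w $ k)" if w: "w \<in> carrier_vec n" for w
  proof -
    have "v \<bullet> w = unit_vec n (Suc j) \<bullet> w + (if A $$ (Suc j, j) = 1 then 0\<^sub>v n else unit_vec n k) \<bullet> w"
      unfolding v_def by (rule add_scalar_prod_distrib[of _ n], insert w, auto)
    then show ?thesis using w jn k by auto
  qed
  have vu: "v \<bullet> u = 0"
    unfolding vdot[OF u] using jn k by (auto simp: u_def)
  have eX: "e \<bullet> X = 0" unfolding e_def using X jn by (simp add: X_def)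
  have P1P1: "P1 * P1 = 1\<^sub>m n" unfolding P1_def by (rule rk1_invol[OF u v vu])
  have P2P2: "P2 * P2 = 1\<^sub>m n" unfolding P2_def by (rule rk1_invol[OF X e eX])
  have P1e: "P1 *\<^sub>v unit_vec n i = unit_vec n i" if i: "i \<le> j" for i
  proof -
    have "v \<bullet> unit_vec n i = 0" unfolding vdot[OF unit_vec_carrier] using i jn k by auto
    then show ?thesis unfolding P1_def rk1_mult_vec[OF u v unit_vec_carrier]
      using u X add_zero_smult[OF unit_vec_carrier] by simp
  qed
  have P2e: "P2 *\<^sub>v unit_vec n i = unit_vec n i" if i: "i \<le> j" for i
  proof -
    have "e \<bullet> unit_vec n i = 0" unfolding e_def using i jn by auto
    then show ?thesis unfolding P2_def rk1_mult_vec[OF X e unit_vec_carrier]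
      using u X add_zero_smult[OF unit_vec_carrier] by simp
  qed
  have colj: "col A j \<in> carrier_vec n" using A by auto
  have P1c: "P1 *\<^sub>v col A j = X + e"
  proof -
    have "v \<bullet> col A j = 1" unfolding vdot[OF colj] using A jn k by auto
    then show ?thesis unfolding P1_def rk1_mult_vec[OF u v colj]
      using A jn by (intro eq_vecI, auto simp: u_def X_def e_def)
  qed
  have Xe: "X + e \<in> carrier_vec n" using X e by simp
  have P2c: "P2 *\<^sub>v (X + e) = e"
  proof -
    have "e \<bullet> (X + e) = 1" unfolding e_def using X jn by (simp add: X_def)
    then show ?thesis unfolding P2_def rk1_mult_vec[OF X e Xe]
      using jn by (intro eq_vecI, auto simp: X_def e_def)
  qed
  define A1 where "A1 = P1 * A * P1"
  have A1: "A1 \<in> carrier_mat n n" using A P1 by (simp add: A1_def)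
  have colA: "A *\<^sub>v unit_vec n i = col A i" if "i < n" for i using A that by (simp add: mult_unit_vec_col)
  have colA1: "A1 *\<^sub>v unit_vec n i = col A1 i" if "i < n" for i using A1 that by (simp add: mult_unit_vec_col)
  have c1: "col A1 i = (if i < j then unit_vec n (Suc i) else X + e)" if i: "i \<le> j" for i
  proof -
    have "col A1 i = P1 *\<^sub>v (A *\<^sub>v (P1 *\<^sub>v unit_vec n i))" unfolding A1_def
      by (rule col_sim[OF P1 A], insert i jn, simp)
    also have "\<dots> = P1 *\<^sub>v col A i" unfolding P1e[OF i] using i jn colA by simp
    also have "\<dots> = (if i < j then unit_vec n (Suc i) else X + e)"
      using sh P1e[of "Suc i"] P1c i by (cases "i < j", auto)
    finally show ?thesis .
  qed
  have "col (P2 * A1 * P2) i = unit_vec n (Suc i)" if i: "i < Suc j" for i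
  proof -
    have "col (P2 * A1 * P2) i = P2 *\<^sub>v (A1 *\<^sub>v (P2 *\<^sub>v unit_vec n i))"
      by (rule col_sim[OF P2 A1], insert i jn, simp)
    also have "\<dots> = P2 *\<^sub>v col A1 i" using i jn colA1 P2e[of i] by simp
    also have "\<dots> = unit_vec n (Suc i)"
      using c1[of i] P2e[of "Suc i"] P2c i unfolding e_def by (cases "i < j", auto simp: less_Suc_eq)
    finally show ?thesis .
  qed
  then show ?thesis using P1 P2 P1P1 P2P2 unfolding A1_def by blast
qed


lemma col_shift_entry: assumes A: "(A :: bit mat) \<in> carrier_mat n n" and c: "col A b = unit_vec n (Suc b)"
  and a: "a < n" and b: "b < n"
  shows "A $$ (a,b) = (if a = Suc b then 1 else 0)"
proof -
  have "A $$ (a,b) = col A b $ a" using A a b by simp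
  then show ?thesis using c a by (simp add: unit_vec_def)
qed

lemma block_case:
  assumes A: "(A :: bit mat) \<in> carrier_mat n n" and jn: "Suc j < n"
    and sh: "\<forall>i<j. col A i = unit_vec n (Suc i)"
    and z: "\<forall>i. j < i \<longrightarrow> i < n \<longrightarrow> A $$ (i,j) = 0"
  shows "A = four_block_mat (comp (Suc j) (vec (Suc j) (\<lambda>a. A $$ (a,j))))
     (mat (Suc j) (n - Suc j) (\<lambda>(a,b). A $$ (a, b + Suc j))) (0\<^sub>m (n - Suc j) (Suc j))
     (mat (n - Suc j) (n - Suc j) (\<lambda>(a,b). A $$ (a + Suc j, b + Suc j)))"
    (is "A = ?B")
proof (rule eq_matI)
  fix a b assume "a < dim_row ?B" "b < dim_col ?B"
  then have a: "a < n" and b: "b < n" using jn by (auto simp: comp_def)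
  show "A $$ (a,b) = ?B $$ (a,b)"
  proof (cases "b < j")
    case True
    then have "A $$ (a,b) = (if a = Suc b then 1 else 0)"
      using col_shift_entry[OF A _ a b] sh by simp
    then show ?thesis using a b True jn by (auto simp: comp_def)
  next
    case False
    show ?thesis
    proof (cases "b = j")
      case True
      then show ?thesis using a b jn z by (auto simp: comp_def)
    next
      case F2: False
      then have "j < b" using False by simp
      then show ?thesis using a b jn z by (auto simp: comp_def)
    qed
  qed
qed (use A jn in \<open>auto simp: comp_def\<close>)

lemma nc_all: "(A :: bit mat) \<in> carrier_mat n n \<Longrightarrow> nc n A"
proof (induct n arbitrary: A rule: less_induct)
  case (less n)
  show ?case
  proof (cases "n = 0")
    case True
    then have "A = 0\<^sub>m 0 0" using less(2) by (intro eq_matI, auto)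
    then show ?thesis unfolding nc_def using True
      by (intro exI[of _ "0\<^sub>m 0 0"] exI[of _ "0\<^sub>m 0 0"], auto)
  next
    case False
    then have n: "0 < n" by simp
    have main: "\<And>j A. j + t = n - 1 \<Longrightarrow> (A :: bit mat) \<in> carrier_mat n n
        \<Longrightarrow> \<forall>i<j. col A i = unit_vec n (Suc i) \<Longrightarrow> nc n A" for t
    proof (induct t)
      case (0 j A)
      then have j: "j = n - 1" by simp
      have "A = comp n (col A (n - 1))"
      proof (rule eq_matI)
        fix a b assume "a < dim_row (comp n (col A (n - 1)))" "b < dim_col (comp n (col A (n - 1)))"
        then have a: "a < n" and b: "b < n" by (auto simp: comp_def)
        show "A $$ (a,b) = comp n (col A (n - 1)) $$ (a,b)"
        proof (cases "Suc b < n")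
          case True
          then have "A $$ (a,b) = (if a = Suc b then 1 else 0)"
            using col_shift_entry[OF 0(2) _ a b] 0(3) j by simp
          then show ?thesis using a b True by (auto simp: comp_def)
        next
          case False
          then have "b = n - 1" using b by simp
          then show ?thesis using a b False 0(2) by (auto simp: comp_def)
        qed
      qed (use 0(2) in \<open>auto simp: comp_def\<close>)
      moreover have "nc n (comp n (col A (n - 1)))" by (rule nc_comp, insert 0(2) n, auto)
      ultimately show ?case by simp
    next
      case (Suc t j A)
      note A = Suc(3) and sh = Suc(4)
      have jn: "Suc j < n" using Suc(2) by simp
      show ?case
      proof (cases "\<exists>k. j < k \<and> k < n \<and> A $$ (k,j) = 1")
        case True
        then obtain k where k: "j < k" "k < n" "A $$ (k,j) = 1" by blast
        from step_sim[OF A jn sh k] obtain P1 P2 where P1: "P1 \<in> carrier_mat n n" and P2: "P2 \<in> carrier_mat n n"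
          and PP1: "P1 * P1 = 1\<^sub>m n" and PP2: "P2 * P2 = 1\<^sub>m n"
          and sh2: "\<forall>i<Suc j. col (P2 * (P1 * A * P1) * P2) i = unit_vec n (Suc i)" by blast
        have A1: "P1 * A * P1 \<in> carrier_mat n n" using P1 A by simp
        have "nc n (P2 * (P1 * A * P1) * P2)"
          by (rule Suc(1)[OF _ _ sh2], insert Suc(2) A1 P2, auto)
        then have "nc n (P1 * A * P1)" by (rule nc_invol[OF A1 P2 PP2])
        then show ?thesis by (rule nc_invol[OF A P1 PP1])
      next
        case False
        then have z: "\<forall>i. j < i \<longrightarrow> i < n \<longrightarrow> A $$ (i,j) = 0" by auto
        let ?B = "mat (n - Suc j) (n - Suc j) (\<lambda>(a,b). A $$ (a + Suc j, b + Suc j))"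
        have "nc (Suc j) (comp (Suc j) (vec (Suc j) (\<lambda>a. A $$ (a,j))))" by (rule nc_comp, auto)
        moreover have "nc (n - Suc j) ?B" by (rule less(1), insert jn, auto)
        ultimately have "nc (Suc j + (n - Suc j)) (four_block_mat (comp (Suc j) (vec (Suc j) (\<lambda>a. A $$ (a,j))))
           (mat (Suc j) (n - Suc j) (\<lambda>(a,b). A $$ (a, b + Suc j))) (0\<^sub>m (n - Suc j) (Suc j)) ?B)"
          by (intro nc_block_upper, auto)
        then show ?thesis using block_case[OF A jn sh z] jn by simp
      qed
    qed
    show ?thesis by (rule main[of 0 "n - 1"], insert less(2), auto)
  qed
qed


lemma bit_add_shuffle: "(x::bit) + y + (y + z) = x + z" by (cases y; cases x; cases z; auto simp: add_bit_eq_xor)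

lemma bit_solve: "(r::bit) + i = e + n \<Longrightarrow> r = e + (i + n)"
  by (cases r; cases i; cases e; cases n; auto simp: add_bit_eq_xor)

lemma frob: assumes N: "(N :: bit mat) \<in> carrier_mat n n"
  shows "(1\<^sub>m n + N) ^\<^sub>m (2 ^ k) = 1\<^sub>m n + N ^\<^sub>m (2 ^ k)"
proof (induct k)
  case 0 then show ?case using N by simp
next
  case (Suc k)
  let ?M = "N ^\<^sub>m (2 ^ k)"
  have M: "?M \<in> carrier_mat n n" using N by simp
  have one: "(1\<^sub>m n :: bit mat) \<in> carrier_mat n n" by simp
  have IN: "1\<^sub>m n + N \<in> carrier_mat n n" using N by simp
  have "(1\<^sub>m n + N) ^\<^sub>m (2 ^ Suc k) = (1\<^sub>m n + N) ^\<^sub>m (2 ^ k + 2 ^ k)" by (simp add: mult_2)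
  also have "\<dots> = (1\<^sub>m n + ?M) * (1\<^sub>m n + ?M)" unfolding pow_mat_add[OF IN] Suc ..
  also have "\<dots> = (1\<^sub>m n + ?M) * 1\<^sub>m n + (1\<^sub>m n + ?M) * ?M"
    by (rule mult_add_distrib_mat[of _ n n], insert M, auto)
  also have "(1\<^sub>m n + ?M) * ?M = 1\<^sub>m n * ?M + ?M * ?M"
    by (rule add_mult_distrib_mat[of _ n n], insert M, auto)
  also have "?M * ?M = N ^\<^sub>m (2 ^ Suc k)" using pow_mat_add[OF N, of "2^k" "2^k"] by (simp add: mult_2)
  also have "(1\<^sub>m n + ?M) * 1\<^sub>m n + (1\<^sub>m n * ?M + N ^\<^sub>m (2 ^ Suc k)) = 1\<^sub>m n + N ^\<^sub>m (2 ^ Suc k)"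
    using M N by (intro eq_matI, auto simp: bit_add_shuffle)
  finally show ?case .
qed

theorem proposition1p6:
  fixes m k :: nat
  assumes "m \<le> 2 ^ k"
  shows "\<exists>n. n \<le> 2 ^ k \<and> n_torsion_clean (ring_mat TYPE(bit) m ()) n"
proof -
  let ?R = "ring_mat TYPE(bit) m ()"
  have ct: "clean_with_torsion ?R (2 ^ k)"
    unfolding clean_with_torsion_def
  proof
    fix r assume "r \<in> carrier ?R"
    then have r: "r \<in> carrier_mat m m" by (simp add: ring_mat_simps)
    have "r + 1\<^sub>m m \<in> carrier_mat m m" using r by simp
    from nc_all[OF this] obtain E N where E: "E \<in> carrier_mat m m" and N: "N \<in> carrier_mat m m"
      and EE: "E * E = E" and Nm: "N ^\<^sub>m m = 0\<^sub>m m m" and rEN: "r + 1\<^sub>m m = E + N"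
      unfolding nc_def by blast
    let ?u = "1\<^sub>m m + N"
    have u: "?u \<in> carrier_mat m m" using N by simp
    have N2k: "N ^\<^sub>m (2 ^ k) = 0\<^sub>m m m"
    proof -
      have "N ^\<^sub>m (2 ^ k) = N ^\<^sub>m (m + (2 ^ k - m))" using assms by simp
      also have "\<dots> = N ^\<^sub>m m * N ^\<^sub>m (2 ^ k - m)" by (rule pow_mat_add[OF N])
      finally show ?thesis using Nm N by simp
    qed
    have u2k: "?u ^\<^sub>m (2 ^ k) = 1\<^sub>m m" unfolding frob[OF N] N2k by simp
    let ?x = "?u ^\<^sub>m (2 ^ k - 1)"
    have x: "?x \<in> carrier_mat m m" using u by simp
    have "?u ^\<^sub>m (2 ^ k) = ?u ^\<^sub>m (Suc (2 ^ k - 1))" by simp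
    also have "\<dots> = ?x * ?u" by (rule pow_mat.simps(2))
    finally have xu: "?x * ?u = 1\<^sub>m m" using u2k by simp
    have "?u * ?x = ?u ^\<^sub>m 1 * ?x" using u by simp
    also have "\<dots> = ?u ^\<^sub>m (1 + (2 ^ k - 1))" by (rule pow_mat_add[OF u, symmetric])
    also have "1 + (2 ^ k - 1) = (2 ^ k :: nat)" by simp
    finally have ux: "?u * ?x = 1\<^sub>m m" using u2k by simp
    have uU: "?u \<in> Units ?R" unfolding Units_def using u x xu ux by (auto simp: ring_mat_simps)
    have upow: "?u [^]\<^bsub>?R\<^esub> ((2::nat) ^ k) = \<one>\<^bsub>?R\<^esub>"
      using pow_mat_ring_pow[OF u, of "2 ^ k" "()"] u2k by (simp add: ring_mat_simps)
    have req: "r = E + ?u"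
    proof (rule eq_matI)
      fix a b assume "a < dim_row (E + ?u)" "b < dim_col (E + ?u)"
      then have a: "a < m" and b: "b < m" using E N by auto
      have "(r + 1\<^sub>m m) $$ (a,b) = (E + N) $$ (a,b)" using rEN by simp
      then have "r $$ (a,b) + 1\<^sub>m m $$ (a,b) = E $$ (a,b) + N $$ (a,b)" using a b r E N by simp
      then have "r $$ (a,b) = E $$ (a,b) + (1\<^sub>m m $$ (a,b) + N $$ (a,b))" by (rule bit_solve)
      then show "r $$ (a,b) = (E + ?u) $$ (a,b)" using a b E N by simp
    qed (use r E N in auto)
    show "\<exists>e\<in>carrier ?R. \<exists>u\<in>Units ?R. e \<otimes>\<^bsub>?R\<^esub> e = e \<and> u [^]\<^bsub>?R\<^esub> ((2::nat) ^ k) = \<one>\<^bsub>?R\<^esub> \<and> r = e \<oplus>\<^bsub>?R\<^esub> u"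
      using E EE uU upow req by (intro bexI[of _ E] bexI[of _ ?u], auto simp: ring_mat_simps)
  qed
  let ?P = "\<lambda>n. 1 \<le> n \<and> clean_with_torsion ?R n"
  have P2k: "?P (2 ^ k)" using ct by simp
  define n0 where "n0 = (LEAST n. ?P n)"
  have Pn0: "?P n0" unfolding n0_def by (rule LeastI[where P = ?P, OF P2k])
  have le: "n0 \<le> 2 ^ k" unfolding n0_def by (rule Least_le[where P = ?P, OF P2k])
  have "\<forall>n'. 1 \<le> n' \<and> n' < n0 \<longrightarrow> \<not> clean_with_torsion ?R n'"
    using not_less_Least[where P = ?P] unfolding n0_def by blast
  then have "n_torsion_clean ?R n0" using Pn0 unfolding n_torsion_clean_def by blast
  then show ?thesis using le by blast
qed


end
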